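(* Let $\phi$ be a strictly convex norm on $\mathbf{R}^n$ of class $\mathcal{C}^2$ on $\mathbf{R}^n\setminus\{0\}$ and $K\subseteq\mathbf{R}^n$ closed. Then $\rho^\phi_K:\mathbf{R}^n\to[1,\infty]$ is upper semicontinuous and $$\rho^\phi_K(x)=t\,\rho^\phi_K(a+t(x-a))\quad\text{for }x\in\mathbf{R}^n,\ a\in\xi^\phi_K(x),\ 0<t\le\rho^\phi_K(x),\ t<\infty.$$ Moreover, $\mathrm{Cut}^\phi(K)=\{x\in\mathbf{R}^n:\rho^\phi_K(x)=1\}$.
   Context: A norm $\phi$ is strictly convex if $\phi(a+b)=\phi(a)+\phi(b)$ implies $\phi(b)a=\phi(a)b$. For closed $K$: $\delta^\phi_K(x)=\inf\{\phi(y-x):y\in K\}$; $\xi^\phi_K(x)=K\cap\{w:\phi(x-w)=\delta^\phi_K(x)\}$; $\rho^\phi_K(x)=\sup\bigl(\mathbf{R}\cap\{s:\delta^\phi_K(a+s(x-a))=s\,\delta^\phi_K(x)\}\bigr)$ for any $a\in\xi^\phi_K(x)$ (independent of the choice of $a$). $N^\phi(K)=\{(a,\eta):a\in K,\ \phi(\eta)=1,\ \delta^\phi_K(a+s\eta)=s\text{ for some }s>0\}$, $r^\phi_K(a,\eta)=\sup\{s>0:\delta^\phi_K(a+s\eta)=s\}$, and $\mathrm{Cut}^\phi(K)=\{a+r^\phi_K(a,\eta)\eta:(a,\eta)\in N^\phi(K),\ r^\phi_K(a,\eta)<\infty\}$. *)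

theory Defs
  imports "HOL-Analysis.Analysis"
begin

definition is_norm :: "('a::real_vector \<Rightarrow> real) \<Rightarrow> bool" where
  "is_norm \<phi> \<longleftrightarrow> (\<forall>x. \<phi> x = 0 \<longleftrightarrow> x = 0) \<and> (\<forall>c x. \<phi> (c *\<^sub>R x) = \<bar>c\<bar> * \<phi> x)
     \<and> (\<forall>x y. \<phi> (x + y) \<le> \<phi> x + \<phi> y)"

definition strictly_convex_norm :: "('a::real_vector \<Rightarrow> real) \<Rightarrow> bool" where
  "strictly_convex_norm \<phi> \<longleftrightarrow> is_norm \<phi> \<and>
     (\<forall>a b. \<phi> (a + b) = \<phi> a + \<phi> b \<longrightarrow> \<phi> b *\<^sub>R a = \<phi> a *\<^sub>R b)"

definition C2_on :: "'a::euclidean_space set \<Rightarrow> ('a \<Rightarrow> real) \<Rightarrow> bool" where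
  "C2_on S f \<longleftrightarrow> (\<exists>(f' :: 'a \<Rightarrow> 'a \<Rightarrow>\<^sub>L real) (f'' :: 'a \<Rightarrow> 'a \<Rightarrow>\<^sub>L ('a \<Rightarrow>\<^sub>L real)).
      (\<forall>x\<in>S. (f has_derivative blinfun_apply (f' x)) (at x)) \<and>
      (\<forall>x\<in>S. (f' has_derivative blinfun_apply (f'' x)) (at x)) \<and>
      continuous_on S f'')"

definition upper_semicontinuous :: "('a::topological_space \<Rightarrow> ereal) \<Rightarrow> bool" where
  "upper_semicontinuous f \<longleftrightarrow> (\<forall>c. open {x. f x < c})"

definition dist_fun :: "('a::real_vector \<Rightarrow> real) \<Rightarrow> 'a set \<Rightarrow> 'a \<Rightarrow> real" where
  "dist_fun \<phi> K x = Inf {\<phi> (y - x) | y. y \<in> K}"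

definition proj_set :: "('a::real_vector \<Rightarrow> real) \<Rightarrow> 'a set \<Rightarrow> 'a \<Rightarrow> 'a set" where
  "proj_set \<phi> K x = {w \<in> K. \<phi> (x - w) = dist_fun \<phi> K x}"

definition reach_fun :: "('a::real_vector \<Rightarrow> real) \<Rightarrow> 'a set \<Rightarrow> 'a \<Rightarrow> ereal" where
  "reach_fun \<phi> K x = (let a = (SOME a. a \<in> proj_set \<phi> K x) in
     Sup (ereal ` {s::real. dist_fun \<phi> K (a + s *\<^sub>R (x - a)) = s * dist_fun \<phi> K x}))"

definition normal_bundle :: "('a::real_vector \<Rightarrow> real) \<Rightarrow> 'a set \<Rightarrow> ('a \<times> 'a) set" where
  "normal_bundle \<phi> K = {(a, \<eta>). a \<in> K \<and> \<phi> \<eta> = 1 \<and> (\<exists>s>0. dist_fun \<phi> K (a + s *\<^sub>R \<eta>) = s)}"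

definition reach_normal :: "('a::real_vector \<Rightarrow> real) \<Rightarrow> 'a set \<Rightarrow> 'a \<Rightarrow> 'a \<Rightarrow> ereal" where
  "reach_normal \<phi> K a \<eta> = Sup (ereal ` {s::real. s > 0 \<and> dist_fun \<phi> K (a + s *\<^sub>R \<eta>) = s})"

definition cut_locus :: "('a::real_vector \<Rightarrow> real) \<Rightarrow> 'a set \<Rightarrow> 'a set" where
  "cut_locus \<phi> K = {a + real_of_ereal (reach_normal \<phi> K a \<eta>) *\<^sub>R \<eta> | a \<eta>.
      (a, \<eta>) \<in> normal_bundle \<phi> K \<and> reach_normal \<phi> K a \<eta> < \<infinity>}"

end

theory Submission
  imports Defs
begin

locale snorm =
  fixes \<phi> :: "'a::euclidean_space \<Rightarrow> real" and K :: "'a set"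
  assumes sc: "strictly_convex_norm \<phi>" and clK: "closed K" and neK: "K \<noteq> {}"
begin

lemma nrm: "is_norm \<phi>" using sc unfolding strictly_convex_norm_def by auto
lemma phi0: "\<phi> x = 0 \<longleftrightarrow> x = 0" using nrm unfolding is_norm_def by auto
lemma phis: "\<phi> (c *\<^sub>R x) = \<bar>c\<bar> * \<phi> x" using nrm unfolding is_norm_def by auto
lemma phit: "\<phi> (x + y) \<le> \<phi> x + \<phi> y" using nrm unfolding is_norm_def by auto
lemma phim: "\<phi> (- x) = \<phi> x" using phis[of "-1" x] by simp
lemma phisym: "\<phi> (x - y) = \<phi> (y - x)" using phim[of "x - y"] by simp
lemma phinn: "0 \<le> \<phi> x"
proof -
  have "\<phi> (x + - x) \<le> \<phi> x + \<phi> (-x)" by (rule phit)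
  then show ?thesis using phi0[of 0] phim[of x] by simp
qed
lemma phitd: "\<phi> (x - z) \<le> \<phi> (x - y) + \<phi> (y - z)"
  using phit[of "x - y" "y - z"] by simp
lemma strict: "\<phi> (a + b) = \<phi> a + \<phi> b \<Longrightarrow> \<phi> b *\<^sub>R a = \<phi> a *\<^sub>R b"
  using sc unfolding strictly_convex_norm_def by auto

lemma phi_convex: "convex_on UNIV \<phi>"
proof (rule convex_onI)
  fix t x y :: "_" assume t: "0 < t" "t < (1::real)"
  have "\<phi> ((1 - t) *\<^sub>R x + t *\<^sub>R y) \<le> \<phi> ((1 - t) *\<^sub>R x) + \<phi> (t *\<^sub>R y)" by (rule phit)
  also have "\<dots> = (1 - t) * \<phi> x + t * \<phi> y" using t by (simp add: phis)
  finally show "\<phi> ((1 - t) *\<^sub>R x + t *\<^sub>R y) \<le> (1 - t) * \<phi> x + t * \<phi> y" .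
qed (simp)

lemma phi_cont: "continuous_on UNIV \<phi>"
  by (rule convex_on_continuous[OF open_UNIV phi_convex])

lemma phi_lower: "\<exists>m>0. \<forall>v. m * norm v \<le> \<phi> v"
proof -
  have ne: "sphere (0::'a) 1 \<noteq> {}"
    using vector_choose_size[of 1] by (auto simp: dist_norm)
  obtain u where u: "u \<in> sphere 0 1" "\<forall>y\<in>sphere 0 1. \<phi> u \<le> \<phi> y"
    using continuous_attains_inf[OF compact_sphere ne continuous_on_subset[OF phi_cont]] by blast
  have "u \<noteq> 0" using u by auto
  then have pos: "\<phi> u > 0" using phi0[of u] phinn[of u] by linarith
  have "\<phi> u * norm v \<le> \<phi> v" for v
  proof (cases "v = 0")
    case False
    then have "(1 / norm v) *\<^sub>R v \<in> sphere 0 1" by (auto simp: dist_norm)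
    then have "\<phi> u \<le> \<phi> ((1 / norm v) *\<^sub>R v)" using u by auto
    also have "\<dots> = \<phi> v / norm v" by (simp add: phis)
    finally show ?thesis using False by (simp add: field_simps)
  qed (simp add: phinn)
  then show ?thesis using pos by blast
qed

lemma phi_upper: "\<exists>M>0. \<forall>v. \<phi> v \<le> M * norm v"
proof -
  have ne: "sphere (0::'a) 1 \<noteq> {}"
    using vector_choose_size[of 1] by (auto simp: dist_norm)
  obtain u where u: "u \<in> sphere 0 1" "\<forall>y\<in>sphere 0 1. \<phi> y \<le> \<phi> u"
    using continuous_attains_sup[OF compact_sphere ne continuous_on_subset[OF phi_cont]] by blast
  have "u \<noteq> 0" using u by auto
  then have pos: "\<phi> u > 0" using phi0[of u] phinn[of u] by linarith
  have "\<phi> v \<le> \<phi> u * norm v" for v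
  proof (cases "v = 0")
    case False
    then have "(1 / norm v) *\<^sub>R v \<in> sphere 0 1" by (auto simp: dist_norm)
    then have "\<phi> ((1 / norm v) *\<^sub>R v) \<le> \<phi> u" using u by auto
    moreover have "\<phi> ((1 / norm v) *\<^sub>R v) = \<phi> v / norm v" by (simp add: phis)
    ultimately show ?thesis using False by (simp add: field_simps)
  qed (use phi0[of 0] in simp)
  then show ?thesis using pos by blast
qed


abbreviation "\<delta> \<equiv> dist_fun \<phi> K"
abbreviation "\<xi> \<equiv> proj_set \<phi> K"

lemma dset_ne: "{\<phi> (y - x) | y. y \<in> K} \<noteq> {}" using neK by auto
lemma dset_bdd: "bdd_below {\<phi> (y - x) | y. y \<in> K}"
  by (rule bdd_belowI[of _ 0]) (auto simp: phinn)
lemma d_le: "y \<in> K \<Longrightarrow> \<delta> x \<le> \<phi> (y - x)"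
  unfolding dist_fun_def by (rule cInf_lower) (auto intro: dset_bdd)
lemma d_nn: "0 \<le> \<delta> x"
  unfolding dist_fun_def by (rule cInf_greatest[OF dset_ne]) (auto simp: phinn)

lemma proj_ex: "\<exists>a. a \<in> \<xi> x"
proof -
  obtain m where m: "m > 0" "\<And>v. m * norm v \<le> \<phi> v" using phi_lower by blast
  obtain y0 where y0: "y0 \<in> K" using neK by auto
  define C where "C = K \<inter> cball x (\<phi> (y0 - x) / m)"
  have cC: "compact C" unfolding C_def
    by (rule closed_Int_compact[OF clK compact_cball])
  have y0C: "y0 \<in> C" unfolding C_def using y0 m(1) m(2)[of "y0 - x"]
    by (auto simp: dist_norm field_simps norm_minus_commute)
  have cont: "continuous_on C (\<lambda>y. \<phi> (y - x))"
    by (rule continuous_on_compose2[OF phi_cont]) (auto intro!: continuous_intros)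
  obtain a where a: "a \<in> C" "\<forall>y\<in>C. \<phi> (a - x) \<le> \<phi> (y - x)"
    using continuous_attains_inf[OF cC _ cont] y0C by blast
  have all: "\<phi> (a - x) \<le> \<phi> (y - x)" if "y \<in> K" for y
  proof (cases "y \<in> C")
    case False
    then have "\<phi> (y0 - x) / m < norm (y - x)" using that unfolding C_def
      by (auto simp: dist_norm norm_minus_commute)
    then have "\<phi> (y0 - x) < m * norm (y - x)" using m(1) by (simp add: field_simps)
    then show ?thesis using m(2)[of "y - x"] a y0C by fastforce
  qed (use a in auto)
  have aK: "a \<in> K" using a(1) unfolding C_def by auto
  have "\<delta> x = \<phi> (a - x)"
  proof (rule antisym)
    show "\<delta> x \<le> \<phi> (a - x)" by (rule d_le[OF aK])
    show "\<phi> (a - x) \<le> \<delta> x" unfolding dist_fun_def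
      by (rule cInf_greatest[OF dset_ne]) (use all in auto)
  qed
  then show ?thesis using aK unfolding proj_set_def by (auto simp: phisym)
qed

lemma projD: "a \<in> \<xi> x \<Longrightarrow> a \<in> K \<and> \<phi> (x - a) = \<delta> x"
  unfolding proj_set_def by auto

lemma d_lip: "\<delta> x \<le> \<delta> z + \<phi> (z - x)"
proof -
  obtain a where a: "a \<in> \<xi> z" using proj_ex by blast
  have "\<delta> x \<le> \<phi> (a - x)" using d_le projD[OF a] by blast
  also have "\<dots> \<le> \<phi> (a - z) + \<phi> (z - x)" by (rule phitd)
  also have "\<phi> (a - z) = \<delta> z" using projD[OF a] by (simp add: phisym)
  finally show ?thesis .
qed

lemma d_cont: "continuous_on UNIV \<delta>"
proof -
  obtain M where M: "M > 0" "\<And>v. \<phi> v \<le> M * norm v" using phi_upper by blast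
  have "M-lipschitz_on UNIV \<delta>"
  proof (rule lipschitz_onI)
    fix x z
    have "\<delta> x - \<delta> z \<le> M * dist x z" using d_lip[of x z] M(2)[of "z - x"]
      by (simp add: dist_norm norm_minus_commute)
    moreover have "\<delta> z - \<delta> x \<le> M * dist x z" using d_lip[of z x] M(2)[of "x - z"]
      by (simp add: dist_norm)
    ultimately show "dist (\<delta> x) (\<delta> z) \<le> M * dist x z" by (simp add: dist_real_def abs_le_iff)
  qed (use M in auto)
  then show ?thesis by (rule lipschitz_on_continuous_on)
qed

lemma d_K: "x \<in> K \<Longrightarrow> \<delta> x = 0"
  using d_le[of x x] d_nn[of x] phi0[of 0] by simp

lemma d0: "\<delta> x = 0 \<longleftrightarrow> x \<in> K"
proof
  assume "\<delta> x = 0"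
  obtain a where "a \<in> \<xi> x" using proj_ex by blast
  then have "a \<in> K" "\<phi> (x - a) = 0" using projD \<open>\<delta> x = 0\<close> by auto
  then show "x \<in> K" using phi0 by auto
qed (rule d_K)

lemma proj_K: "x \<in> K \<Longrightarrow> \<xi> x = {x}"
  unfolding proj_set_def using d_K phi0 by auto


definition "S x a = {s. \<delta> (a + s *\<^sub>R (x - a)) = s * \<delta> x}"
definition "R x a = Sup (ereal ` S x a)"

lemma S_le: assumes "a \<in> \<xi> x" "0 \<le> s" shows "\<delta> (a + s *\<^sub>R (x - a)) \<le> s * \<delta> x"
proof -
  have "\<delta> (a + s *\<^sub>R (x - a)) \<le> \<phi> (a - (a + s *\<^sub>R (x - a)))" using d_le projD[OF assms(1)] by blast
  also have "\<dots> = \<phi> (s *\<^sub>R (x - a))" by (simp add: phim)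
  also have "\<dots> = s * \<delta> x" using assms projD[OF assms(1)] by (simp add: phis)
  finally show ?thesis .
qed

lemma S_0: "a \<in> \<xi> x \<Longrightarrow> 0 \<in> S x a" unfolding S_def using projD d_K by auto
lemma S_1: "1 \<in> S x a" unfolding S_def by simp

lemma S_K: "x \<in> K \<Longrightarrow> a \<in> \<xi> x \<Longrightarrow> S x a = UNIV"
  using proj_K[of x] d_K[of x] unfolding S_def by auto

lemma S_nonneg: "x \<notin> K \<Longrightarrow> s \<in> S x a \<Longrightarrow> 0 \<le> s"
proof (rule ccontr)
  assume "x \<notin> K" "s \<in> S x a" "\<not> 0 \<le> s"
  then have "0 < \<delta> x" using d0[of x] d_nn[of x] by auto
  then have "s * \<delta> x < 0" using \<open>\<not> 0 \<le> s\<close> by (simp add: mult_neg_pos)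
  moreover have "\<delta> (a + s *\<^sub>R (x - a)) = s * \<delta> x" using \<open>s \<in> S x a\<close> unfolding S_def by simp
  ultimately show False using d_nn[of "a + s *\<^sub>R (x - a)"] by linarith
qed

lemma S_down: assumes "a \<in> \<xi> x" "s \<in> S x a" "0 \<le> s'" "s' \<le> s" shows "s' \<in> S x a"
proof -
  have "\<delta> (a + s *\<^sub>R (x - a)) \<le> \<delta> (a + s' *\<^sub>R (x - a)) + \<phi> ((a + s' *\<^sub>R (x - a)) - (a + s *\<^sub>R (x - a)))"
    by (rule d_lip)
  also have "(a + s' *\<^sub>R (x - a)) - (a + s *\<^sub>R (x - a)) = (s' - s) *\<^sub>R (x - a)" by (simp add: algebra_simps)
  also have "\<phi> \<dots> = (s - s') * \<delta> x" using assms(4) projD[OF assms(1)] by (simp add: phis)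
  finally have "s' * \<delta> x \<le> \<delta> (a + s' *\<^sub>R (x - a))" using assms(2) unfolding S_def by (simp add: algebra_simps)
  then show ?thesis using S_le[OF assms(1,3)] unfolding S_def by simp
qed

lemma S_closed: "closed (S x a)"
  unfolding S_def
  by (rule closed_Collect_eq[OF continuous_on_compose2[OF d_cont]]) (auto intro!: continuous_intros)

lemma R_ge1: "1 \<le> R x a"
proof -
  have "ereal 1 \<le> Sup (ereal ` S x a)" by (rule Sup_upper) (use S_1 in auto)
  then show ?thesis unfolding R_def by (simp add: one_ereal_def)
qed

lemma S_mem: assumes a: "a \<in> \<xi> x" and t: "0 \<le> t" "ereal t \<le> R x a" shows "t \<in> S x a"
proof (rule ccontr)
  assume nt: "t \<notin> S x a"
  then have xK: "x \<notin> K" using S_K[OF _ a] by auto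
  have "open (- S x a)" using S_closed by auto
  then obtain e where e: "e > 0" "ball t e \<subseteq> - S x a" using nt by (meson ComplI open_contains_ball)
  have "s \<le> t - e" if "s \<in> S x a" for s
  proof (rule ccontr)
    assume "\<not> s \<le> t - e"
    show False
    proof (cases "t \<le> s")
      case True then show False using S_down[OF a that t(1)] nt by auto
    next
      case False then have "s \<in> ball t e" using \<open>\<not> s \<le> t - e\<close> by (auto simp: dist_real_def)
      then show False using e that by auto
    qed
  qed
  then have "R x a \<le> ereal (t - e)" unfolding R_def by (auto intro!: SUP_least)
  from order_trans[OF t(2) this] show False using e(1) by simp
qed

lemma proj_unique: assumes xK: "x \<notin> K" and a: "a \<in> \<xi> x" and s: "s \<in> S x a" "1 < s" and b: "b \<in> \<xi> x"
  shows "b = a"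
proof -
  define p where "p = a + s *\<^sub>R (x - a)"
  define d where "d = \<delta> x"
  have d: "d > 0" using xK d0[of x] d_nn[of x] unfolding d_def by auto
  have dp: "\<delta> p = s * d" using s unfolding S_def p_def d_def by auto
  have A: "\<phi> (p - x) = (s - 1) * d" unfolding p_def d_def
  proof -
    have "a + s *\<^sub>R (x - a) - x = (s - 1) *\<^sub>R (x - a)" by (simp add: algebra_simps)
    then show "\<phi> (a + s *\<^sub>R (x - a) - x) = (s - 1) * \<delta> x" using s(2) projD[OF a] by (simp add: phis)
  qed
  have B: "\<phi> (x - b) = d" using projD[OF b] d_def by simp
  have "\<phi> ((p - x) + (x - b)) = \<phi> (p - x) + \<phi> (x - b)"
  proof (rule antisym)
    show "\<phi> ((p - x) + (x - b)) \<le> \<phi> (p - x) + \<phi> (x - b)" by (rule phit)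
    have "\<delta> p \<le> \<phi> (b - p)" using d_le projD[OF b] by blast
    then show "\<phi> (p - x) + \<phi> (x - b) \<le> \<phi> ((p - x) + (x - b))" using A B dp
      by (simp add: phisym algebra_simps)
  qed
  from strict[OF this] have "d *\<^sub>R (p - x) = ((s - 1) * d) *\<^sub>R (x - b)" using A B by simp
  moreover have "p - x = (s - 1) *\<^sub>R (x - a)" unfolding p_def by (simp add: algebra_simps)
  ultimately have "((s - 1) * d) *\<^sub>R (x - a) = ((s - 1) * d) *\<^sub>R (x - b)" by (simp add: mult.commute)
  then have "x - a = x - b" using d s(2) by simp
  then show ?thesis by simp
qed

lemma R_le1: assumes "x \<notin> K" "a \<in> \<xi> x" "b \<in> \<xi> x" "b \<noteq> a" shows "R x a \<le> 1"
proof (rule ccontr)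
  assume "\<not> R x a \<le> 1"
  then have "1 < Sup (ereal ` S x a)" unfolding R_def by simp
  then obtain s where "s \<in> S x a" "1 < ereal s" unfolding less_Sup_iff by auto
  then show False using proj_unique[OF assms(1,2) _ _ assms(3)] assms(4) by auto
qed

lemma R_indep: assumes "a \<in> \<xi> x" "b \<in> \<xi> x" shows "R x a = R x b"
proof (cases "x \<in> K")
  case True then show ?thesis using assms proj_K by auto
next
  case False
  show ?thesis
  proof (cases "a = b")
    case False
    then show ?thesis using R_le1[OF \<open>x \<notin> K\<close> assms] R_le1[OF \<open>x \<notin> K\<close> assms(2,1)] R_ge1[of x a] R_ge1[of x b]
      by simp
  qed simp
qed

lemma reach_eq: assumes "a \<in> \<xi> x" shows "reach_fun \<phi> K x = R x a"
proof -
  have "(SOME a. a \<in> \<xi> x) \<in> \<xi> x" using proj_ex by (meson someI_ex)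
  then show ?thesis unfolding reach_fun_def Let_def R_def[symmetric] S_def[symmetric]
    using R_indep[OF _ assms] by simp
qed

lemma claim3: assumes a: "a \<in> \<xi> x" and t: "0 < t" "ereal t \<le> R x a"
  shows "R x a = ereal t * R (a + t *\<^sub>R (x - a)) a"
proof -
  define y where "y = a + t *\<^sub>R (x - a)"
  have tS: "t \<in> S x a" using S_mem[OF a _ t(2)] t(1) by simp
  then have dy: "\<delta> y = t * \<delta> x" unfolding S_def y_def by simp
  have ay: "a \<in> \<xi> y" unfolding proj_set_def using projD[OF a] t(1) dy
    by (simp add: y_def phis)
  have eq: "S x a = (\<lambda>u. t * u) ` S y a"
  proof -
    have *: "u \<in> S y a \<longleftrightarrow> t * u \<in> S x a" for u
      unfolding S_def y_def using dy[unfolded y_def] by (simp add: algebra_simps)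
    show ?thesis
    proof (intro set_eqI iffI)
      fix v assume "v \<in> S x a"
      then have "v / t \<in> S y a" using * t(1) by simp
      then show "v \<in> (\<lambda>u. t * u) ` S y a" using t(1) by (auto intro!: image_eqI[of _ _ "v / t"])
    qed (use * in auto)
  qed
  have "R x a = (SUP u\<in>S y a. ereal t * ereal u)" unfolding R_def eq by (simp add: image_comp o_def)
  also have "\<dots> = ereal t * R y a"
  proof -
    have "ereal t * Sup (ereal ` S y a) = (SUP u\<in>S y a. ereal t * ereal u)"
      using Sup_ereal_mult_left'[of "S y a" t ereal] S_0[OF ay] t(1) by (auto simp: image_comp)
    then show ?thesis unfolding R_def by simp
  qed
  finally show ?thesis unfolding y_def .
qed


lemma R_K: assumes "x \<in> K" "a \<in> \<xi> x" shows "R x a = \<infinity>"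
proof (rule ereal_top)
  fix B show "ereal B \<le> R x a" unfolding R_def S_K[OF assms] by (rule Sup_upper) auto
qed

lemma cut_sub: assumes "z \<in> cut_locus \<phi> K" shows "reach_fun \<phi> K z = 1"
proof -
  obtain a \<eta> where z: "z = a + real_of_ereal (reach_normal \<phi> K a \<eta>) *\<^sub>R \<eta>"
    and N: "(a, \<eta>) \<in> normal_bundle \<phi> K" and fin: "reach_normal \<phi> K a \<eta> < \<infinity>"
    using assms unfolding cut_locus_def by auto
  have aK: "a \<in> K" and e1: "\<phi> \<eta> = 1" using N unfolding normal_bundle_def by auto
  obtain s0 where s0: "s0 > 0" "\<delta> (a + s0 *\<^sub>R \<eta>) = s0" using N unfolding normal_bundle_def by auto
  define T where "T = {s. s > 0 \<and> \<delta> (a + s *\<^sub>R \<eta>) = s}"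
  define T' where "T' = {s. 0 \<le> s \<and> \<delta> (a + s *\<^sub>R \<eta>) = s}"
  have RN: "reach_normal \<phi> K a \<eta> = Sup (ereal ` T)" unfolding reach_normal_def T_def by simp
  have s0T: "s0 \<in> T" using s0 unfolding T_def by auto
  have "ereal s0 \<le> Sup (ereal ` T)" using s0T by (auto intro: Sup_upper)
  then obtain r where r: "Sup (ereal ` T) = ereal r" using fin RN s0
    by (cases "Sup (ereal ` T)") auto
  have rpos: "r > 0" using \<open>ereal s0 \<le> Sup (ereal ` T)\<close> r s0 by simp
  have zr: "z = a + r *\<^sub>R \<eta>" using z RN r by simp
  have upT: "\<delta> (a + s *\<^sub>R \<eta>) \<le> s" if "0 \<le> s" for s
  proof -
    have "\<delta> (a + s *\<^sub>R \<eta>) \<le> \<phi> (a - (a + s *\<^sub>R \<eta>))" using d_le[OF aK] by blast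
    also have "\<dots> = s" using that e1 by (simp add: phim phis)
    finally show ?thesis .
  qed
  have T'closed: "closed T'" unfolding T'_def
    by (intro closed_Int[of "{s. 0 \<le> s}" "{s. \<delta> (a + s *\<^sub>R \<eta>) = s}", simplified Int_def, simplified]
        closed_Collect_le closed_Collect_eq continuous_on_compose2[OF d_cont])
      (auto intro!: continuous_intros)
  have T'down: "s' \<in> T'" if "s \<in> T'" "0 \<le> s'" "s' \<le> s" for s s'
  proof -
    have "\<delta> (a + s *\<^sub>R \<eta>) \<le> \<delta> (a + s' *\<^sub>R \<eta>) + \<phi> ((a + s' *\<^sub>R \<eta>) - (a + s *\<^sub>R \<eta>))"
      by (rule d_lip)
    also have "(a + s' *\<^sub>R \<eta>) - (a + s *\<^sub>R \<eta>) = (s' - s) *\<^sub>R \<eta>" by (simp add: algebra_simps)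
    also have "\<phi> \<dots> = s - s'" using that e1 by (simp add: phis)
    finally show ?thesis using that upT[of s'] unfolding T'_def by simp
  qed
  have rT': "r \<in> T'"
  proof (rule ccontr)
    assume nt: "r \<notin> T'"
    have "open (- T')" using T'closed by auto
    then obtain e where e: "e > 0" "ball r e \<subseteq> - T'" using nt by (meson ComplI open_contains_ball)
    have "s \<le> r - e" if "s \<in> T" for s
    proof (rule ccontr)
      assume "\<not> s \<le> r - e"
      have sT': "s \<in> T'" using that unfolding T_def T'_def by auto
      show False
      proof (cases "r \<le> s")
        case True then show False using T'down[OF sT' _ True] rpos nt by auto
      next
        case False then have "s \<in> ball r e" using \<open>\<not> s \<le> r - e\<close> by (auto simp: dist_real_def)
        then show False using e sT' by auto
      qed
    qed
    then have "Sup (ereal ` T) \<le> ereal (r - e)" by (auto intro!: SUP_least)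
    then show False using r e(1) by simp
  qed
  then have dz: "\<delta> z = r" using zr unfolding T'_def by simp
  have zK: "z \<notin> K" using dz rpos d0[of z] by auto
  have az: "a \<in> \<xi> z" unfolding proj_set_def using aK dz zr e1 rpos by (simp add: phis)
  have "R z a \<le> 1" unfolding R_def
  proof (rule SUP_least)
    fix u assume u: "u \<in> S z a"
    have u0: "0 \<le> u" using S_nonneg[OF zK u] .
    have "\<delta> (a + (u * r) *\<^sub>R \<eta>) = u * r" using u dz zr unfolding S_def by simp
    then have "u * r \<in> T'" using u0 rpos unfolding T'_def by simp
    show "ereal u \<le> 1"
    proof (cases "u = 0")
      case False
      then have "u * r \<in> T" using \<open>u * r \<in> T'\<close> u0 rpos unfolding T_def T'_def by simp
      then have "ereal (u * r) \<le> ereal r" unfolding r[symmetric] by (auto intro: Sup_upper)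
      then have "u * r \<le> 1 * r" by simp
      then show ?thesis using rpos by (simp add: one_ereal_def)
    qed simp
  qed
  then show ?thesis using R_ge1[of z a] reach_eq[OF az] by simp
qed

lemma cut_sup: assumes "reach_fun \<phi> K x = 1" shows "x \<in> cut_locus \<phi> K"
proof -
  obtain a where a: "a \<in> \<xi> x" using proj_ex by blast
  have R1: "R x a = 1" using assms reach_eq[OF a] by simp
  have xK: "x \<notin> K" using R_K[OF _ a] R1 by auto
  define d where "d = \<delta> x"
  have d: "d > 0" using xK d0[of x] d_nn[of x] unfolding d_def by auto
  define \<eta> where "\<eta> = (1 / d) *\<^sub>R (x - a)"
  have aK: "a \<in> K" using projD[OF a] by simp
  have e1: "\<phi> \<eta> = 1" unfolding \<eta>_def using projD[OF a] d d_def by (simp add: phis)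
  have xe: "a + d *\<^sub>R \<eta> = x" unfolding \<eta>_def using d by simp
  have N: "(a, \<eta>) \<in> normal_bundle \<phi> K" unfolding normal_bundle_def
    using aK e1 d xe d_def by auto
  define T where "T = {s. s > 0 \<and> \<delta> (a + s *\<^sub>R \<eta>) = s}"
  have RN: "reach_normal \<phi> K a \<eta> = Sup (ereal ` T)" unfolding reach_normal_def T_def by simp
  have dT: "d \<in> T" unfolding T_def using d xe d_def by simp
  have Tle: "s \<le> d" if "s \<in> T" for s
  proof -
    have "a + s *\<^sub>R \<eta> = a + (s / d) *\<^sub>R (x - a)" unfolding \<eta>_def by simp
    then have "s / d \<in> S x a" using that d unfolding S_def T_def d_def by simp
    then have "ereal (s / d) \<le> R x a" unfolding R_def by (auto intro: Sup_upper)
    then have "s / d \<le> 1" using R1 by (simp add: one_ereal_def)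
    then show ?thesis using d by (simp add: field_simps)
  qed
  have "Sup (ereal ` T) = ereal d"
  proof (rule antisym)
    show "Sup (ereal ` T) \<le> ereal d" using Tle by (auto intro!: SUP_least)
    show "ereal d \<le> Sup (ereal ` T)" using dT by (auto intro: Sup_upper)
  qed
  then have "reach_normal \<phi> K a \<eta> = ereal d" using RN by simp
  then show ?thesis unfolding cut_locus_def using N xe by force
qed


lemma phi_isCont: "isCont \<phi> x" using phi_cont continuous_on_eq_continuous_at[of UNIV] by auto
lemma d_isCont: "isCont \<delta> x" using d_cont continuous_on_eq_continuous_at[of UNIV] by auto

lemma closed_ge: "closed {x. c \<le> reach_fun \<phi> K x}"
  unfolding closed_sequential_limits
proof (intro allI impI, elim conjE)
  fix xs l assume xs: "\<forall>n. xs n \<in> {x. c \<le> reach_fun \<phi> K x}" and lim: "xs \<longlonglongrightarrow> l"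
  define as where "as n = (SOME a. a \<in> \<xi> (xs n))" for n
  have as: "as n \<in> \<xi> (xs n)" for n unfolding as_def by (rule someI_ex[OF proj_ex])
  obtain m where m: "m > 0" "\<And>v. m * norm v \<le> \<phi> v" using phi_lower by blast
  obtain M where M: "M > 0" "\<And>v. \<phi> v \<le> M * norm v" using phi_upper by blast
  obtain B where B: "\<And>n. norm (xs n) \<le> B"
    using convergent_imp_bounded[OF lim] unfolding bounded_iff by auto
  have "norm (as n) \<le> B + (\<delta> l + M * (norm l + B)) / m" for n
  proof -
    have "m * norm (xs n - as n) \<le> \<phi> (xs n - as n)" by (rule m(2))
    also have "\<dots> = \<delta> (xs n)" using projD[OF as] by simp
    also have "\<dots> \<le> \<delta> l + \<phi> (l - xs n)" by (rule d_lip)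
    also have "\<phi> (l - xs n) \<le> M * (norm l + B)"
      using M(2)[of "l - xs n"] M(1) norm_triangle_ineq4[of l "xs n"] B[of n]
      by (smt (verit) mult_left_mono)
    finally have "norm (xs n - as n) \<le> (\<delta> l + M * (norm l + B)) / m"
      using m(1) by (simp add: field_simps)
    moreover have "norm (as n) \<le> norm (xs n) + norm (xs n - as n)"
      by (metis norm_triangle_ineq4 norm_minus_commute add.commute diff_diff_eq2 diff_self
          diff_zero norm_diff_triangle_ineq add_diff_cancel_left')
    ultimately show ?thesis using B[of n] by linarith
  qed
  then have "bounded (range as)" unfolding bounded_iff by blast
  then obtain a' r where r: "strict_mono r" "(as \<circ> r) \<longlonglongrightarrow> a'"
    using bounded_imp_convergent_subsequence by blast
  have limr: "(xs \<circ> r) \<longlonglongrightarrow> l" using LIMSEQ_subseq_LIMSEQ[OF lim r(1)] .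
  have a'K: "a' \<in> K" using closed_sequentially[OF clK _ r(2)] as projD by auto
  have L1: "(\<lambda>n. \<phi> ((xs \<circ> r) n - (as \<circ> r) n)) \<longlonglongrightarrow> \<phi> (l - a')"
    by (rule isCont_tendsto_compose[OF phi_isCont tendsto_diff[OF limr r(2)]])
  have L2: "(\<lambda>n. \<delta> ((xs \<circ> r) n)) \<longlonglongrightarrow> \<delta> l"
    by (rule isCont_tendsto_compose[OF d_isCont limr])
  have eqn: "\<phi> (xs n - as n) = \<delta> (xs n)" for n using projD[OF as] by simp
  have L1': "(\<lambda>n. \<delta> (xs (r n))) \<longlonglongrightarrow> \<phi> (l - a')" using L1 unfolding comp_def eqn .
  have "\<phi> (l - a') = \<delta> l"
    using LIMSEQ_unique[OF L1' L2[unfolded comp_def]] .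
  then have a': "a' \<in> \<xi> l" unfolding proj_set_def using a'K by simp
  show "l \<in> {x. c \<le> reach_fun \<phi> K x}"
  proof (simp, rule dense_le)
    fix y assume y: "y < c"
    show "y \<le> reach_fun \<phi> K l"
    proof (cases y)
      case (real s)
      show ?thesis
      proof (cases "0 \<le> s")
        case False
        then have "y \<le> 1" using real by simp
        then show ?thesis using R_ge1[of l a'] reach_eq[OF a'] by simp
      next
        case True
        have inS: "s \<in> S (xs n) (as n)" for n
        proof (rule S_mem[OF as True])
          have "ereal s \<le> c" using y real by simp
          also have "c \<le> reach_fun \<phi> K (xs n)" using xs by simp
          finally show "ereal s \<le> R (xs n) (as n)" using reach_eq[OF as] by simp
        qed
        have L3: "(\<lambda>n. \<delta> ((as \<circ> r) n + s *\<^sub>R ((xs \<circ> r) n - (as \<circ> r) n))) \<longlonglongrightarrow> \<delta> (a' + s *\<^sub>R (l - a'))"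
          by (rule isCont_tendsto_compose[OF d_isCont])
             (intro tendsto_intros r(2) limr)
        have L4: "(\<lambda>n. s * \<delta> ((xs \<circ> r) n)) \<longlonglongrightarrow> s * \<delta> l"
          by (intro tendsto_intros L2)
        have "\<delta> (a' + s *\<^sub>R (l - a')) = s * \<delta> l"
        proof -
          have eq2: "\<delta> (as n + s *\<^sub>R (xs n - as n)) = s * \<delta> (xs n)" for n
            using inS[of n] unfolding S_def by simp
          have L3': "(\<lambda>n. s * \<delta> (xs (r n))) \<longlonglongrightarrow> \<delta> (a' + s *\<^sub>R (l - a'))"
            using L3 unfolding comp_def eq2 .
          show ?thesis using LIMSEQ_unique[OF L3' L4[unfolded comp_def]] .
        qed
        then have "s \<in> S l a'" unfolding S_def by simp
        then have "ereal s \<le> R l a'" unfolding R_def by (auto intro: Sup_upper)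
        then show ?thesis using real reach_eq[OF a'] by simp
      qed
    qed (use y in auto)
  qed
qed

lemma usc: "upper_semicontinuous (reach_fun \<phi> K)"
  unfolding upper_semicontinuous_def
proof
  fix c
  have "{x. reach_fun \<phi> K x < c} = - {x. c \<le> reach_fun \<phi> K x}" by (auto simp: not_le)
  then show "open {x. reach_fun \<phi> K x < c}" using closed_ge[of c] by (simp add: open_Compl)
qed

end

theorem lemma2p33:
  fixes \<phi> :: "real^'n \<Rightarrow> real" and K :: "(real^'n) set"
  assumes "strictly_convex_norm \<phi>"
    and "C2_on (UNIV - {0}) \<phi>"
    and "closed K" and "K \<noteq> {}"
  shows "(\<forall>x. 1 \<le> reach_fun \<phi> K x) \<and> upper_semicontinuous (reach_fun \<phi> K)
    \<and> (\<forall>x a t. a \<in> proj_set \<phi> K x \<longrightarrow> 0 < t \<longrightarrow> ereal t \<le> reach_fun \<phi> K x \<longrightarrow>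
          reach_fun \<phi> K x = ereal t * reach_fun \<phi> K (a + t *\<^sub>R (x - a)))
    \<and> cut_locus \<phi> K = {x. reach_fun \<phi> K x = 1}"
proof -
  interpret snorm \<phi> K using assms by unfold_locales auto
  have c1: "\<forall>x. 1 \<le> reach_fun \<phi> K x"
  proof
    fix x
    obtain a where a: "a \<in> proj_set \<phi> K x" using proj_ex by blast
    show "1 \<le> reach_fun \<phi> K x" using reach_eq[OF a] R_ge1 by simp
  qed
  have c3: "\<forall>x a t. a \<in> proj_set \<phi> K x \<longrightarrow> 0 < t \<longrightarrow> ereal t \<le> reach_fun \<phi> K x \<longrightarrow>
          reach_fun \<phi> K x = ereal t * reach_fun \<phi> K (a + t *\<^sub>R (x - a))"
  proof (intro allI impI)
    fix x a t assume a: "a \<in> proj_set \<phi> K x" and t: "0 < t" "ereal t \<le> reach_fun \<phi> K x"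
    have tS: "t \<in> S x a" using S_mem[OF a _ ] t reach_eq[OF a] by simp
    then have dy: "\<delta> (a + t *\<^sub>R (x - a)) = t * \<delta> x" unfolding S_def by simp
    have ay: "a \<in> proj_set \<phi> K (a + t *\<^sub>R (x - a))" unfolding proj_set_def using projD[OF a] t(1) dy
      by (simp add: phis)
    show "reach_fun \<phi> K x = ereal t * reach_fun \<phi> K (a + t *\<^sub>R (x - a))"
      using claim3[OF a t(1)] t(2) reach_eq[OF a] reach_eq[OF ay] by simp
  qed
  have c4: "cut_locus \<phi> K = {x. reach_fun \<phi> K x = 1}"
    using cut_sub cut_sup by blast
  show ?thesis using c1 usc c3 c4 by blast
qed

end
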